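(* Let $1\le r\le s\le t$ and let $u=ABCd$, $v=A'B'C'd'$ be vertices of $E3C(r,s,t)$ with $A\ne A'$, $B\ne B'$, $C=C'$ and $d\ne d'$. Then there exist $2r+2$ pairwise internally disjoint $u$–$v$ paths in $E3C(r,s,t)$, each of length at most $r+s+7$.
   Context: The exchanged 3-ary $n$-cube $E3C(r,s,t)$ ($r,s,t\ge1$, $n=r+s+t+1$): vertices are strings written $x=ABCd$ with $A\in\{0,1,2\}^r$, $B\in\{0,1,2\}^s$, $C\in\{0,1,2\}^t$, $d\in\{0,1,2\}$. Two distinct vertices $x=ABCd$, $y=A'B'C'd'$ are adjacent iff one of: (E0) $A=A',B=B',C=C'$ and $d\ne d'$; (E1) $d=d'=0$, $A=A'$, $B=B'$ and $C,C'$ differ in exactly one position; (E2) $d=d'=1$, $A=A'$, $C=C'$ and $B,B'$ differ in exactly one position; (E3) $d=d'=2$, $B=B'$, $C=C'$ and $A,A'$ differ in exactly one position. Paths are internally disjoint if they share no vertices other than their endpoints; length = number of edges. *)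

theory Defs
  imports Main
begin

type_synonym e3vert = "nat list \<times> nat list \<times> nat list \<times> nat"

definition tern_str :: "nat \<Rightarrow> nat list \<Rightarrow> bool" where
  "tern_str k X \<longleftrightarrow> length X = k \<and> (\<forall>x\<in>set X. x < 3)"

definition e3c_verts :: "nat \<Rightarrow> nat \<Rightarrow> nat \<Rightarrow> e3vert set" where
  "e3c_verts r s t = {(A,B,C,d). tern_str r A \<and> tern_str s B \<and> tern_str t C \<and> d < 3}"

definition differ1 :: "nat list \<Rightarrow> nat list \<Rightarrow> bool" where
  "differ1 X Y \<longleftrightarrow> length X = length Y \<and> card {i. i < length X \<and> X ! i \<noteq> Y ! i} = 1"

definition e3c_adj :: "nat \<Rightarrow> nat \<Rightarrow> nat \<Rightarrow> e3vert \<Rightarrow> e3vert \<Rightarrow> bool" where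
  "e3c_adj r s t x y \<longleftrightarrow> x \<in> e3c_verts r s t \<and> y \<in> e3c_verts r s t \<and> x \<noteq> y \<and>
     (case x of (A,B,C,d) \<Rightarrow> case y of (A',B',C',d') \<Rightarrow>
        (A = A' \<and> B = B' \<and> C = C' \<and> d \<noteq> d')
      \<or> (d = 0 \<and> d' = 0 \<and> A = A' \<and> B = B' \<and> differ1 C C')
      \<or> (d = 1 \<and> d' = 1 \<and> A = A' \<and> C = C' \<and> differ1 B B')
      \<or> (d = 2 \<and> d' = 2 \<and> B = B' \<and> C = C' \<and> differ1 A A'))"

definition e3c_path :: "nat \<Rightarrow> nat \<Rightarrow> nat \<Rightarrow> e3vert \<Rightarrow> e3vert \<Rightarrow> e3vert list \<Rightarrow> bool" where
  "e3c_path r s t u v p \<longleftrightarrow> p \<noteq> [] \<and> hd p = u \<and> last p = v \<and> distinct p \<and>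
     set p \<subseteq> e3c_verts r s t \<and>
     (\<forall>i. Suc i < length p \<longrightarrow> e3c_adj r s t (p ! i) (p ! Suc i))"

definition path_len :: "'a list \<Rightarrow> nat" where
  "path_len p = length p - 1"

definition internally_disjoint :: "'a \<Rightarrow> 'a \<Rightarrow> 'a list \<Rightarrow> 'a list \<Rightarrow> bool" where
  "internally_disjoint u v p q \<longleftrightarrow> set p \<inter> set q \<subseteq> {u, v}"

end

theory Submission
  imports Defs
begin


fun ham :: "nat list \<Rightarrow> nat list \<Rightarrow> nat" where
  "ham (x#xs) (y#ys) = (if x = y then 0 else 1) + ham xs ys"
| "ham _ _ = 0"

lemma ham_same[simp]: "ham X X = 0"
  by (induction X) auto

lemma ham_sym: "ham X Y = ham Y X"
  by (induction X Y rule: ham.induct) auto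

lemma ham_le: "ham X Y \<le> length X"
  by (induction X Y rule: ham.induct) auto

lemma ham_0_iff: "length X = length Y \<Longrightarrow> ham X Y = 0 \<longleftrightarrow> X = Y"
  by (induction X Y rule: ham.induct) auto

lemma card_diff_ham:
  "length X = length Y \<Longrightarrow> card {i. i < length X \<and> X ! i \<noteq> Y ! i} = ham X Y"
proof (induction X arbitrary: Y)
  case Nil then show ?case by simp
next
  case (Cons x xs)
  then obtain y ys where Y: "Y = y # ys" "length ys = length xs" by (cases Y) auto
  have eq: "{i. i < length (x#xs) \<and> (x#xs) ! i \<noteq> Y ! i} =
      (if x = y then {} else {0}) \<union> Suc ` {i. i < length xs \<and> xs ! i \<noteq> ys ! i}"
    apply (rule set_eqI)
    subgoal for i by (cases i) (auto simp: Y)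
    done
  have "card ((if x = y then {} else {0}) \<union> Suc ` {i. i < length xs \<and> xs ! i \<noteq> ys ! i})
      = (if x = y then 0 else 1) + card {i. i < length xs \<and> xs ! i \<noteq> ys ! i}"
    by (auto simp: card_image)
  then show ?case using eq Cons.IH[OF Y(2)[symmetric]] Y by simp
qed

lemma differ1_ham: "differ1 X Y \<longleftrightarrow> length X = length Y \<and> ham X Y = 1"
  unfolding differ1_def using card_diff_ham by metis

fun seg :: "nat list \<Rightarrow> nat list \<Rightarrow> nat list list" where
  "seg (x#xs) (y#ys) = (if x = y then map ((#) x) (seg xs ys) else (x#xs) # map ((#) y) (seg xs ys))"
| "seg xs ys = [xs]"

lemma seg_ne[simp]: "seg X Y \<noteq> []"
  by (induction X Y rule: seg.induct) auto

lemma seg_hd[simp]: "hd (seg X Y) = X"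
  by (induction X Y rule: seg.induct) (auto simp: hd_map)

lemma seg_last[simp]: "length X = length Y \<Longrightarrow> last (seg X Y) = Y"
  by (induction X Y rule: seg.induct) (auto simp: last_map)

lemma seg_length: "length X = length Y \<Longrightarrow> length (seg X Y) = ham X Y + 1"
  by (induction X Y rule: seg.induct) auto

lemma seg_nth_ham: "length X = length Y \<Longrightarrow> i < length (seg X Y) \<Longrightarrow> ham X (seg X Y ! i) = i"
proof (induction X Y arbitrary: i rule: seg.induct)
  case (1 x xs y ys)
  then show ?case by (auto simp: nth_Cons split: nat.splits)
qed auto

lemma seg_set_len: "length X = length Y \<Longrightarrow> Z \<in> set (seg X Y) \<Longrightarrow> length Z = length X"
  by (induction X Y arbitrary: Z rule: seg.induct) (auto split: if_splits)

lemma seg_set_vals: "length X = length Y \<Longrightarrow> Z \<in> set (seg X Y) \<Longrightarrow> set Z \<subseteq> set X \<union> set Y"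
  by (induction X Y arbitrary: Z rule: seg.induct) (fastforce split: if_splits)+

lemma seg_set_between: "length X = length Y \<Longrightarrow> Z \<in> set (seg X Y) \<Longrightarrow> ham X Z + ham Z Y = ham X Y"
  by (induction X Y arbitrary: Z rule: seg.induct) (auto split: if_splits)

lemma seg_distinct: "length X = length Y \<Longrightarrow> distinct (seg X Y)"
  unfolding distinct_conv_nth using seg_nth_ham by metis

lemma seg_uniq1: "length X = length Y \<Longrightarrow> Z1 \<in> set (seg X Y) \<Longrightarrow> Z2 \<in> set (seg X Y)
   \<Longrightarrow> ham X Z1 = ham X Z2 \<Longrightarrow> Z1 = Z2"
  by (metis in_set_conv_nth seg_nth_ham)

lemma seg_uniq2: "length X = length Y \<Longrightarrow> Z1 \<in> set (seg X Y) \<Longrightarrow> Z2 \<in> set (seg X Y)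
   \<Longrightarrow> ham Z1 Y = ham Z2 Y \<Longrightarrow> Z1 = Z2"
  by (metis seg_uniq1 seg_set_between add_left_cancel add.commute)

lemma seg_succ: "length X = length Y \<Longrightarrow> successively differ1 (seg X Y)"
proof (induction X Y rule: seg.induct)
  case (1 x xs y ys)
  have m: "successively differ1 (map ((#) z) (seg xs ys))" for z
    using 1 by (auto simp: successively_map differ1_ham elim!: successively_mono)
  show ?case
  proof (cases "x = y")
    case True then show ?thesis using m by simp
  next
    case False
    have "hd (map ((#) y) (seg xs ys)) = y # xs" by (simp add: hd_map)
    then show ?thesis using m[of y] False 1(3)
      by (auto simp: successively_Cons differ1_ham)
  qed
qed auto

definition tern :: "nat list \<Rightarrow> bool" where "tern X \<longleftrightarrow> (\<forall>x\<in>set X. x < 3)"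

lemma tern_str_tern: "tern_str n X \<longleftrightarrow> length X = n \<and> tern X"
  by (simp add: tern_str_def tern_def)

lemma seg_tern: "tern_str n X \<Longrightarrow> tern_str n Y \<Longrightarrow> Z \<in> set (seg X Y) \<Longrightarrow> tern_str n Z"
proof -
  assume a: "tern_str n X" "tern_str n Y" "Z \<in> set (seg X Y)"
  then have l: "length X = length Y" by (simp add: tern_str_def)
  have "length Z = n" using seg_set_len[OF l a(3)] a(1) by (simp add: tern_str_def)
  moreover have "\<forall>z\<in>set Z. z < 3"
  proof
    fix z assume "z \<in> set Z"
    then have "z \<in> set X \<union> set Y" using seg_set_vals[OF l a(3)] by blast
    then show "z < 3" using a(1,2) by (auto simp: tern_str_def)
  qed
  ultimately show ?thesis by (simp add: tern_str_def)
qed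

definition dev :: "nat list \<Rightarrow> nat \<Rightarrow> nat list" where
  "dev X h = X[h div 2 := (X ! (h div 2) + h mod 2 + 1) mod 3]"

lemma ham_upd: "k < length X \<Longrightarrow> ham X (X[k := c]) = (if X ! k = c then 0 else 1)"
  by (induction X arbitrary: k) (auto simp: nth_Cons split: nat.splits)

lemma dev_tern: "tern_str n X \<Longrightarrow> h < 2*n \<Longrightarrow> tern_str n (dev X h)"
  unfolding tern_str_def dev_def
proof (intro conjI ballI)
  fix z assume a: "length X = n \<and> (\<forall>x\<in>set X. x < 3)" and
    z: "z \<in> set (X[h div 2 := (X ! (h div 2) + h mod 2 + 1) mod 3])"
  from z have "z \<in> insert ((X ! (h div 2) + h mod 2 + 1) mod 3) (set X)"
    using set_update_subset_insert[of X "h div 2" "(X ! (h div 2) + h mod 2 + 1) mod 3"] by blast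
  with a show "z < 3" by auto
qed auto

lemma mod3_ne: "(x::nat) < 3 \<Longrightarrow> m < 2 \<Longrightarrow> (x + m + 1) mod 3 \<noteq> x"
proof -
  assume "x < 3" "m < 2"
  then have "x = 0 \<or> x = 1 \<or> x = 2" "m = 0 \<or> m = 1" by auto
  then show ?thesis by (elim disjE) simp_all
qed

lemma dev_ham: "tern_str n X \<Longrightarrow> h < 2*n \<Longrightarrow> ham X (dev X h) = 1"
proof -
  assume a: "tern_str n X" "h < 2*n"
  then have k: "h div 2 < length X" using a by (auto simp: tern_str_def)
  then have "X ! (h div 2) < 3" using a by (auto simp: tern_str_def)
  then have "(X ! (h div 2) + h mod 2 + 1) mod 3 \<noteq> X ! (h div 2)"
    using mod3_ne[of "X ! (h div 2)" "h mod 2"] by simp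
  then show ?thesis unfolding dev_def ham_upd[OF k] by simp
qed

lemma dev_ne: "tern_str n X \<Longrightarrow> h < 2*n \<Longrightarrow> dev X h \<noteq> X"
  using dev_ham by force

lemma dev_len[simp]: "length (dev X h) = length X"
  by (simp add: dev_def)

lemma dev_inj: "tern_str n X \<Longrightarrow> h < 2*n \<Longrightarrow> h' < 2*n \<Longrightarrow> dev X h = dev X h' \<Longrightarrow> h = h'"
proof -
  assume a: "tern_str n X" "h < 2*n" "h' < 2*n" "dev X h = dev X h'"
  define k where "k = h div 2"
  define k' where "k' = h' div 2"
  have kl: "k < length X" "k' < length X" using a by (auto simp: k_def k'_def tern_str_def)
  have x3: "X ! k < 3" "X ! k' < 3" using kl a(1) by (auto simp: tern_str_def)
  have n1: "(X ! k + h mod 2 + 1) mod 3 \<noteq> X ! k" using mod3_ne x3 by simp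
  have n2: "(X ! k' + h' mod 2 + 1) mod 3 \<noteq> X ! k'" using mod3_ne x3 by simp
  have e1: "dev X h ! k = (X ! k + h mod 2 + 1) mod 3" using kl by (simp add: dev_def k_def)
  have e2: "dev X h' ! k' = (X ! k' + h' mod 2 + 1) mod 3" using kl by (simp add: dev_def k'_def)
  have kk: "k = k'"
  proof (rule ccontr)
    assume "k \<noteq> k'"
    then have "dev X h' ! k = X ! k" by (simp add: dev_def k'_def)
    then show False using a(4) e1 n1 by simp
  qed
  have "(X ! k + h mod 2 + 1) mod 3 = (X ! k + h' mod 2 + 1) mod 3"
    using a(4) e1 e2 kk by simp
  moreover have "h mod 2 = 0 \<or> h mod 2 = 1" "h' mod 2 = 0 \<or> h' mod 2 = 1" by auto
  moreover have "X ! k = 0 \<or> X ! k = 1 \<or> X ! k = 2" using x3 by auto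
  ultimately have "h mod 2 = h' mod 2" by (elim disjE) simp_all
  then show "h = h'" using kk unfolding k_def k'_def by (metis div_mod_decomp)
qed

lemma ham1_upd: "length X = length Z \<Longrightarrow> ham X Z = 1 \<Longrightarrow>
   \<exists>k<length X. Z = X[k := Z ! k] \<and> Z ! k \<noteq> X ! k"
proof (induction X Z rule: ham.induct)
  case (1 x xs y ys)
  show ?case
  proof (cases "x = y")
    case True
    then obtain k where "k < length xs" "ys = xs[k := ys ! k]" "ys ! k \<noteq> xs ! k"
      using 1 by auto
    then show ?thesis using True by (intro exI[of _ "Suc k"]) auto
  next
    case False
    then have "ham xs ys = 0" using 1 by simp
    then have "xs = ys" using ham_0_iff 1 by simp
    then show ?thesis using False by (intro exI[of _ 0]) auto
  qed
qed auto

lemma dev_surj: "tern_str n X \<Longrightarrow> tern_str n Z \<Longrightarrow> ham X Z = 1 \<Longrightarrow> \<exists>h<2*n. Z = dev X h"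
proof -
  assume a: "tern_str n X" "tern_str n Z" "ham X Z = 1"
  then obtain k where k: "k < length X" "Z = X[k := Z ! k]" "Z ! k \<noteq> X ! k"
    using ham1_upd[of X Z] by (auto simp: tern_str_def)
  have x3: "X ! k < 3" "Z ! k < 3" using k a by (auto simp: tern_str_def)
  define m where "m = (if Z ! k = (X ! k + 1) mod 3 then 0 else 1::nat)"
  have "Z ! k = (X ! k + m + 1) mod 3"
  proof -
    have "X ! k = 0 \<or> X ! k = 1 \<or> X ! k = 2" "Z ! k = 0 \<or> Z ! k = 1 \<or> Z ! k = 2" using x3 by auto
    then show ?thesis using k(3) unfolding m_def by (elim disjE) simp_all
  qed
  moreover have "(2*k+m) div 2 = k" "(2*k+m) mod 2 = m" by (auto simp: m_def)
  ultimately have "Z = dev X (2*k+m)" using k(2) by (simp add: dev_def)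
  moreover have "2*k+m < 2*n" using k(1) a(1) by (auto simp: m_def tern_str_def)
  ultimately show ?thesis by blast
qed

definition devidx :: "nat list \<Rightarrow> nat list \<Rightarrow> nat" where
  "devidx X Z = (SOME h. h < 2 * length X \<and> Z = dev X h)"

lemma devidx_dev: "tern_str n X \<Longrightarrow> h < 2*n \<Longrightarrow> devidx X (dev X h) = h"
  unfolding devidx_def
  apply (rule some_equality)
  using dev_inj by (auto simp: tern_str_def)



lemma differ1_sym: "differ1 X Y \<Longrightarrow> differ1 Y X"
  by (simp add: differ1_ham ham_sym)

lemma differ1_ne: "differ1 X Y \<Longrightarrow> X \<noteq> Y"
  by (auto simp: differ1_ham)

lemma adj_sym: "e3c_adj r s t x y \<Longrightarrow> e3c_adj r s t y x"
  unfolding e3c_adj_def by (auto simp: differ1_sym split: prod.splits)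

lemma verts_iff[simp]: "(X,Y,Z,e) \<in> e3c_verts r s t \<longleftrightarrow> tern_str r X \<and> tern_str s Y \<and> tern_str t Z \<and> e < 3"
  by (simp add: e3c_verts_def)

lemma adj_sw: "tern_str r X \<Longrightarrow> tern_str s Y \<Longrightarrow> tern_str t Z \<Longrightarrow> e < 3 \<Longrightarrow> e' < 3 \<Longrightarrow> e \<noteq> e'
  \<Longrightarrow> e3c_adj r s t (X,Y,Z,e) (X,Y,Z,e')"
  unfolding e3c_adj_def by simp

lemma adj2: "tern_str r X \<Longrightarrow> tern_str r X' \<Longrightarrow> tern_str s Y \<Longrightarrow> tern_str t Z \<Longrightarrow> differ1 X X'
  \<Longrightarrow> e3c_adj r s t (X,Y,Z,2) (X',Y,Z,2)"
  unfolding e3c_adj_def using differ1_ne by auto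

lemma adj1: "tern_str r X \<Longrightarrow> tern_str s Y \<Longrightarrow> tern_str s Y' \<Longrightarrow> tern_str t Z \<Longrightarrow> differ1 Y Y'
  \<Longrightarrow> e3c_adj r s t (X,Y,Z,1) (X,Y',Z,1)"
  unfolding e3c_adj_def using differ1_ne by auto

lemma adj0: "tern_str r X \<Longrightarrow> tern_str s Y \<Longrightarrow> tern_str t Z \<Longrightarrow> tern_str t Z' \<Longrightarrow> differ1 Z Z'
  \<Longrightarrow> e3c_adj r s t (X,Y,Z,0) (X,Y,Z',0)"
  unfolding e3c_adj_def using differ1_ne by auto

lemma succ_ph2: "tern_str r X \<Longrightarrow> tern_str r X' \<Longrightarrow> tern_str s Y \<Longrightarrow> tern_str t Z
  \<Longrightarrow> successively (e3c_adj r s t) (map (\<lambda>W. (W,Y,Z,2::nat)) (seg X X'))"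
  unfolding successively_map
  apply (rule successively_mono[OF seg_succ])
   apply (simp add: tern_str_def)
  using adj2 seg_tern by blast

lemma succ_ph1: "tern_str r X \<Longrightarrow> tern_str s Y \<Longrightarrow> tern_str s Y' \<Longrightarrow> tern_str t Z
  \<Longrightarrow> successively (e3c_adj r s t) (map (\<lambda>W. (X,W,Z,1::nat)) (seg Y Y'))"
  unfolding successively_map
  apply (rule successively_mono[OF seg_succ])
   apply (simp add: tern_str_def)
  using adj1 seg_tern by blast

lemma differ1_dev: "tern_str n X \<Longrightarrow> h < 2*n \<Longrightarrow> differ1 X (dev X h)"
  using dev_ham by (simp add: differ1_ham)

lemma e3c_pathI: "p \<noteq> [] \<Longrightarrow> hd p = u \<Longrightarrow> last p = v \<Longrightarrow> distinct p \<Longrightarrow> set p \<subseteq> e3c_verts r s t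
  \<Longrightarrow> successively (e3c_adj r s t) p \<Longrightarrow> e3c_path r s t u v p"
  unfolding e3c_path_def successively_conv_nth by blast

definition fam :: "nat \<Rightarrow> nat \<Rightarrow> nat \<Rightarrow> e3vert \<Rightarrow> e3vert \<Rightarrow> nat \<Rightarrow> nat \<Rightarrow> bool" where
  "fam r s t u v n L \<longleftrightarrow> (\<exists>P :: nat \<Rightarrow> e3vert list.
     (\<forall>i<n. e3c_path r s t u v (P i) \<and> path_len (P i) \<le> L) \<and>
     (\<forall>i<n. \<forall>j<n. i \<noteq> j \<longrightarrow> internally_disjoint u v (P i) (P j)))"

lemma path_rev: "e3c_path r s t u v p \<Longrightarrow> e3c_path r s t v u (rev p)"
  unfolding e3c_path_def successively_conv_nth[symmetric]
  by (auto simp: hd_rev last_rev elim: successively_mono intro: adj_sym)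

lemma fam_rev: "fam r s t u v n L \<Longrightarrow> fam r s t v u n L"
  unfolding fam_def internally_disjoint_def path_len_def
  apply (elim exE)
  subgoal for P
    apply (rule exI[of _ "\<lambda>i. rev (P i)"])
    using path_rev by (auto simp: insert_commute)
  done

definition sw :: "nat \<Rightarrow> nat" where "sw e = (if e = 1 then 2 else if e = 2 then 1 else e)"
fun phi :: "e3vert \<Rightarrow> e3vert" where "phi (X,Y,Z,e) = (Y,X,Z,sw e)"

lemma phi_phi[simp]: "phi (phi x) = x"
  by (cases x) (auto simp: sw_def)

lemma phi_inj: "phi x = phi y \<longleftrightarrow> x = y"
  by (metis phi_phi)

lemma sw_simps[simp]: "sw e = 0 \<longleftrightarrow> e = 0" "sw e = 1 \<longleftrightarrow> e = 2" "sw e = 2 \<longleftrightarrow> e = 1"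
  "sw e = sw e' \<longleftrightarrow> e = e'" "sw e < 3 \<longleftrightarrow> e < 3" "sw (sw e) = e"
  by (auto simp: sw_def)

lemma adj_phi: "e3c_adj s r t (phi x) (phi y) \<Longrightarrow> e3c_adj r s t x y"
proof -
  obtain X Y Z e where x: "x = (X,Y,Z,e)" by (cases x) auto
  obtain X' Y' Z' e' where y: "y = (X',Y',Z',e')" by (cases y) auto
  assume "e3c_adj s r t (phi x) (phi y)"
  then show ?thesis unfolding x y e3c_adj_def by (simp only: phi.simps verts_iff sw_simps prod.case prod.inject) blast
qed

lemma mem_phi: "x \<in> phi ` S \<longleftrightarrow> phi x \<in> S"
  by (metis image_eqI phi_phi imageE)

lemma adj_phi': "e3c_adj s r t a b \<Longrightarrow> e3c_adj r s t (phi a) (phi b)"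
  using adj_phi[of s r t "phi a" "phi b"] by simp

lemma verts_phi: "a \<in> e3c_verts s r t \<Longrightarrow> phi a \<in> e3c_verts r s t"
  by (cases a) (auto simp: sw_def)

lemma path_phi: "e3c_path s r t (phi u) (phi v) p \<Longrightarrow> e3c_path r s t u v (map phi p)"
proof -
  assume a: "e3c_path s r t (phi u) (phi v) p"
  show ?thesis
  proof (rule e3c_pathI)
    have p: "p \<noteq> []" "hd p = phi u" "last p = phi v" "distinct p" using a by (simp_all add: e3c_path_def)
    show "map phi p \<noteq> []" using p by simp
    show "hd (map phi p) = u" using p by (simp add: hd_map)
    show "last (map phi p) = v" using p by (simp add: last_map)
    have "inj phi" by (rule injI) (simp add: phi_inj)
    then show "distinct (map phi p)" using p by (simp add: distinct_map inj_on_subset[of phi UNIV])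
    have "set p \<subseteq> e3c_verts s r t" using a by (simp add: e3c_path_def)
    then show "set (map phi p) \<subseteq> e3c_verts r s t" unfolding set_map
      using verts_phi by (intro image_subsetI) blast
    have "successively (e3c_adj s r t) p" using a by (simp add: e3c_path_def successively_conv_nth)
    then show "successively (e3c_adj r s t) (map phi p)"
      unfolding successively_map by (rule successively_mono) (rule adj_phi')
  qed
qed

lemma fam_phi: "fam s r t (phi u) (phi v) n L \<Longrightarrow> fam r s t u v n L"
proof -
  assume "fam s r t (phi u) (phi v) n L"
  then obtain P where P1: "\<forall>i<n. e3c_path s r t (phi u) (phi v) (P i) \<and> path_len (P i) \<le> L"
    and P2: "\<forall>i<n. \<forall>j<n. i \<noteq> j \<longrightarrow> internally_disjoint (phi u) (phi v) (P i) (P j)"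
    unfolding fam_def by blast
  show ?thesis unfolding fam_def
  proof (intro exI[of _ "\<lambda>i. map phi (P i)"] conjI allI impI)
    fix i assume "i < n"
    then show "e3c_path r s t u v (map phi (P i))" "path_len (map phi (P i)) \<le> L"
      using P1 path_phi by (auto simp: path_len_def)
  next
    fix i j assume ij: "i < n" "j < n" "i \<noteq> j"
    show "internally_disjoint u v (map phi (P i)) (map phi (P j))"
      unfolding internally_disjoint_def
    proof
      fix x assume x: "x \<in> set (map phi (P i)) \<inter> set (map phi (P j))"
      then have "phi x \<in> set (P i) \<inter> set (P j)" unfolding set_map Int_iff mem_phi by blast
      then have "phi x \<in> {phi u, phi v}" using P2 ij unfolding internally_disjoint_def by blast
      then show "x \<in> {u, v}" by (auto simp: phi_inj)
    qed
  qed
qed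



lemma seg_mem_hd: "X \<in> set (seg X Y)"
  using seg_hd seg_ne hd_in_set by metis

lemma seg_mem_last: "length X = length Y \<Longrightarrow> Y \<in> set (seg X Y)"
  using seg_last seg_ne last_in_set by metis

lemma seg_len_tern: "tern_str n X \<Longrightarrow> tern_str n Y \<Longrightarrow> length (seg X Y) \<le> n + 1"
  using seg_length[of X Y] ham_le[of X Y] by (simp add: tern_str_def)

lemma first_dev:
  assumes "tern_str n X" "tern_str n Y" "X \<noteq> Y"
  obtains h0 where "h0 < 2*n" "\<And>h. h < 2*n \<Longrightarrow> h \<noteq> h0 \<Longrightarrow> dev X h \<notin> set (seg X Y)"
proof -
  have l: "length X = length Y" using assms by (simp add: tern_str_def)
  have "ham X Y \<noteq> 0" using ham_0_iff[OF l] assms(3) by simp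
  then have len: "1 < length (seg X Y)" using seg_length[OF l] by simp
  define Z where "Z = seg X Y ! 1"
  have Zin: "Z \<in> set (seg X Y)" using len Z_def by simp
  have hz: "ham X Z = 1" using seg_nth_ham[OF l len] Z_def by simp
  have tz: "tern_str n Z" using seg_tern[OF assms(1,2) Zin] .
  obtain h0 where h0: "h0 < 2*n" "Z = dev X h0" using dev_surj[OF assms(1) tz hz] by blast
  show ?thesis
  proof (rule that[OF h0(1)])
    fix h assume h: "h < 2*n" "h \<noteq> h0"
    show "dev X h \<notin> set (seg X Y)"
    proof
      assume "dev X h \<in> set (seg X Y)"
      then have "dev X h = Z" using seg_uniq1[OF l _ Zin] dev_ham[OF assms(1) h(1)] hz by simp
      then show False using dev_inj[OF assms(1) h(1) h0(1)] h0(2) h(2) by simp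
    qed
  qed
qed

lemma last_dev:
  assumes "tern_str n X" "tern_str n Y" "X \<noteq> Y"
  obtains t0 where "t0 < 2*n" "\<And>h. h < 2*n \<Longrightarrow> h \<noteq> t0 \<Longrightarrow> dev Y h \<notin> set (seg X Y)"
proof -
  have l: "length X = length Y" using assms by (simp add: tern_str_def)
  have "ham X Y \<noteq> 0" using ham_0_iff[OF l] assms(3) by simp
  then have len: "1 < length (seg X Y)" using seg_length[OF l] by simp
  define k where "k = ham X Y - 1"
  define Z where "Z = seg X Y ! k"
  have kl: "k < length (seg X Y)" using len seg_length[OF l] k_def by simp
  have Zin: "Z \<in> set (seg X Y)" using kl Z_def by simp
  have hz0: "ham X Z = k" using seg_nth_ham[OF l kl] Z_def by simp
  have hz: "ham Y Z = 1" using seg_set_between[OF l Zin] hz0 k_def \<open>ham X Y \<noteq> 0\<close> ham_sym[of Y Z] by simp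
  have tz: "tern_str n Z" using seg_tern[OF assms(1,2) Zin] .
  obtain t0 where t0: "t0 < 2*n" "Z = dev Y t0" using dev_surj[OF assms(2) tz hz] by blast
  show ?thesis
  proof (rule that[OF t0(1)])
    fix h assume h: "h < 2*n" "h \<noteq> t0"
    show "dev Y h \<notin> set (seg X Y)"
    proof
      assume a: "dev Y h \<in> set (seg X Y)"
      have "ham (dev Y h) Y = ham Z Y" using dev_ham[OF assms(2) h(1)] hz ham_sym by metis
      then have "dev Y h = Z" using seg_uniq2[OF l a Zin] by simp
      then show False using dev_inj[OF assms(2) h(1) t0(1)] t0(2) h(2) by simp
    qed
  qed
qed

fun own20 :: "nat list \<Rightarrow> nat list \<Rightarrow> nat list \<Rightarrow> nat list \<Rightarrow> nat list \<Rightarrow> nat \<Rightarrow> nat \<Rightarrow> e3vert \<Rightarrow> nat" where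
  "own20 A A' B C C0 m h0 (X,Y,Z,e) =
    (if e = 0 then (if X = A then 2*m+1 else if X = A' then (if Z = C0 then 2*m+1 else devidx C Z) else devidx A X)
     else if e = 2 then (if Z = C then (if Y = B then (if X \<in> set (seg A A') then h0 else devidx A X) else 2*m)
                         else if Z = C0 then 2*m+1 else devidx C Z)
     else (if Z = C then (if X = A then 2*m else if X = A' then h0 else devidx A X) else 2*m+1))"

lemma L20:
  fixes p q t m :: nat and A A' B B' C :: "nat list"
  assumes m: "1 \<le> m" "m \<le> p" "p \<le> t"
    and tA: "tern_str p A" and tA': "tern_str p A'" and tB: "tern_str q B" and tB': "tern_str q B'"
    and tC: "tern_str t C" and AA: "A \<noteq> A'" and BB: "B \<noteq> B'"
  shows "fam p q t (A,B,C,2) (A',B',C,0) (2*m+2) (p+q+7)"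
proof -
  obtain h0 where h0: "h0 < 2*p" and h0n: "\<And>h. h < 2*p \<Longrightarrow> h \<noteq> h0 \<Longrightarrow> dev A h \<notin> set (seg A A')"
    using first_dev[OF tA tA' AA] by blast
  define u where "u = (A,B,C,2::nat)"
  define v where "v = (A',B',C,0::nat)"
  define C0 where "C0 = dev C h0"
  have h0t: "h0 < 2*t" using h0 m by simp
  have lA: "length A = length A'" and lB: "length B = length B'" using tA tA' tB tB' by (simp_all add: tern_str_def)
  have A'in: "A' \<in> set (seg A A')" using seg_mem_last[OF lA] .
  have Ain: "A \<in> set (seg A A')" using seg_mem_hd .
  have tC0: "tern_str t C0" using dev_tern[OF tC h0t] C0_def by simp
  have C0C: "C0 \<noteq> C" using dev_ne[OF tC h0t] C0_def by simp
  define P where "P h = u # (dev A h,B,C,2) # map (\<lambda>Y. (dev A h, Y, C, 1::nat)) (seg B B') @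
      [(dev A h, B', C, 0), (dev A h, B', dev C h, 0)] @ map (\<lambda>X. (X, B', dev C h, 2)) (seg (dev A h) A')
      @ [(A', B', dev C h, 0), v]" for h
  define D where "D = map (\<lambda>X. (X,B,C,2::nat)) (seg A A') @ map (\<lambda>Y. (A',Y,C,1)) (seg B B') @ [v]"
  define E1 where "E1 = u # map (\<lambda>Y. (A,Y,C,1::nat)) (seg B B') @ map (\<lambda>X. (X,B',C,2)) (seg A A') @ [v]"
  define E2 where "E2 = u # (A,B,C,0) # (A,B,C0,0) # map (\<lambda>X. (X,B,C0,2::nat)) (seg A A') @
      map (\<lambda>Y. (A',Y,C0,1)) (seg B B') @ [(A',B',C0,0), v]"
  define Q where "Q i = (if i < 2*m then (if i = h0 then D else P i) else if i = 2*m then E1 else E2)" for i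
  define own where "own = own20 A A' B C C0 m h0"
  have hf: "dev A h \<noteq> A" "dev A h \<noteq> A'" "dev A h \<notin> set (seg A A')" "dev C h \<noteq> C" "dev C h \<noteq> C0"
     "devidx A (dev A h) = h" "devidx C (dev C h) = h" "tern_str p (dev A h)" "tern_str t (dev C h)"
     "differ1 A (dev A h)" "differ1 C (dev C h)"
    if "h < 2*m" "h \<noteq> h0" for h
  proof -
    have hp: "h < 2*p" "h < 2*t" using that m by auto
    have n: "dev A h \<notin> set (seg A A')" using h0n hp that by blast
    show  "dev A h \<noteq> A" "dev A h \<noteq> A'" "dev A h \<notin> set (seg A A')" "dev C h \<noteq> C" "dev C h \<noteq> C0"
     "devidx A (dev A h) = h" "devidx C (dev C h) = h" "tern_str p (dev A h)" "tern_str t (dev C h)"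
     "differ1 A (dev A h)" "differ1 C (dev C h)"
      using differ1_dev[OF tA hp(1)] differ1_dev[OF tC hp(2)] n A'in dev_ne[OF tA hp(1)] dev_ne[OF tC hp(2)] devidx_dev[OF tA hp(1)]
      devidx_dev[OF tC hp(2)] dev_inj[OF tC hp(2) h0t] that dev_tern[OF tA hp(1)] dev_tern[OF tC hp(2)]
      unfolding C0_def by auto
  qed
  have ownP: "own x = h" if "h < 2*m" "h \<noteq> h0" "x \<in> set (P h)" "x \<noteq> u" "x \<noteq> v" for h x
    using that(3-) hf[OF that(1,2)] C0C AA BB unfolding P_def own_def u_def v_def by auto
  have ownD: "own x = h0" if "x \<in> set D" "x \<noteq> u" "x \<noteq> v" for x
    using that AA BB unfolding D_def own_def u_def v_def by auto
  have ownE1: "own x = 2*m" if "x \<in> set E1" "x \<noteq> u" "x \<noteq> v" for x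
    using that AA BB unfolding E1_def own_def u_def v_def by auto
  have ownE2: "own x = 2*m+1" if "x \<in> set E2" "x \<noteq> u" "x \<noteq> v" for x
    using that AA BB C0C unfolding E2_def own_def u_def v_def by auto
  have ownQ: "own x = i" if "i < 2*m+2" "x \<in> set (Q i)" "x \<noteq> u" "x \<noteq> v" for i x
    using that ownP ownD ownE1 ownE2 unfolding Q_def by (auto split: if_splits)
  have sd: "distinct (seg X Y)" if "length X = length Y" for X Y using seg_distinct that by simp
  have vP: "e3c_path p q t u v (P h) \<and> path_len (P h) \<le> p+q+7" if h: "h < 2*m" "h \<noteq> h0" for h
  proof
    note f = hf[OF h]
    have ld: "length (dev A h) = length A'" using lA by simp
    show "e3c_path p q t u v (P h)"
    proof (rule e3c_pathI)
      show "P h \<noteq> []" "hd (P h) = u" "last (P h) = v" unfolding P_def by simp_all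
      show "distinct (P h)" unfolding P_def u_def v_def
        using f(1-5) AA BB sd[OF lB] sd[OF ld] by (auto simp: distinct_map inj_on_def)
      show "set (P h) \<subseteq> e3c_verts p q t" unfolding P_def u_def v_def
        using f(8,9) tA tA' tB tB' tC seg_tern[OF tB tB'] seg_tern[OF f(8) tA'] by auto
      show "successively (e3c_adj p q t) (P h)" unfolding P_def u_def v_def
        using f(8,9,10,11) tA tA' tB tB' tC succ_ph1[OF f(8) tB tB' tC] succ_ph2[OF f(8) tA' tB' f(9)]
        by (simp add: successively_append_iff successively_Cons hd_append hd_map last_map lA lB ld adj_sw adj2 adj0 differ1_sym)
    qed
    show "path_len (P h) \<le> p+q+7" unfolding P_def path_len_def
      using seg_len_tern[OF tB tB'] seg_len_tern[OF f(8) tA'] by simp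
  qed
  have dC0: "differ1 C C0" using differ1_dev[OF tC h0t] C0_def by simp
  have lens: "length (seg A A') \<le> p+1" "length (seg B B') \<le> q+1"
    using seg_len_tern[OF tA tA'] seg_len_tern[OF tB tB'] by auto
  have vD: "e3c_path p q t u v D \<and> path_len D \<le> p+q+7"
  proof
    show "e3c_path p q t u v D"
    proof (rule e3c_pathI)
      show "D \<noteq> []" "hd D = u" "last D = v" unfolding D_def u_def by (simp_all add: hd_map)
      show "distinct D" unfolding D_def u_def v_def
        using AA BB sd[OF lB] sd[OF lA] by (auto simp: distinct_map inj_on_def)
      show "set D \<subseteq> e3c_verts p q t" unfolding D_def u_def v_def
        using tA tA' tB tB' tC seg_tern[OF tB tB'] seg_tern[OF tA tA'] by auto
      show "successively (e3c_adj p q t) D" unfolding D_def u_def v_def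
        using tA tA' tB tB' tC succ_ph2[OF tA tA' tB tC] succ_ph1[OF tA' tB tB' tC]
        by (simp add: successively_append_iff successively_Cons hd_append hd_map last_map lA lB adj_sw)
    qed
    show "path_len D \<le> p+q+7" unfolding D_def path_len_def using lens by simp
  qed
  have vE1: "e3c_path p q t u v E1 \<and> path_len E1 \<le> p+q+7"
  proof
    show "e3c_path p q t u v E1"
    proof (rule e3c_pathI)
      show "E1 \<noteq> []" "hd E1 = u" "last E1 = v" unfolding E1_def u_def v_def by (simp_all add: last_map)
      show "distinct E1" unfolding E1_def u_def v_def
        using AA BB sd[OF lB] sd[OF lA] by (auto simp: distinct_map inj_on_def)
      show "set E1 \<subseteq> e3c_verts p q t" unfolding E1_def u_def v_def
        using tA tA' tB tB' tC seg_tern[OF tB tB'] seg_tern[OF tA tA'] by auto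
      show "successively (e3c_adj p q t) E1" unfolding E1_def u_def v_def
        using tA tA' tB tB' tC succ_ph2[OF tA tA' tB' tC] succ_ph1[OF tA tB tB' tC]
        by (simp add: successively_append_iff successively_Cons hd_append hd_map last_map lA lB adj_sw)
    qed
    show "path_len E1 \<le> p+q+7" unfolding E1_def path_len_def using lens by simp
  qed
  have vE2: "e3c_path p q t u v E2 \<and> path_len E2 \<le> p+q+7"
  proof
    show "e3c_path p q t u v E2"
    proof (rule e3c_pathI)
      show "E2 \<noteq> []" "hd E2 = u" "last E2 = v" unfolding E2_def u_def v_def by (simp_all add: last_map)
      show "distinct E2" unfolding E2_def u_def v_def
        using AA BB C0C sd[OF lB] sd[OF lA] by (auto simp: distinct_map inj_on_def)
      show "set E2 \<subseteq> e3c_verts p q t" unfolding E2_def u_def v_def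
        using tA tA' tB tB' tC tC0 seg_tern[OF tB tB'] seg_tern[OF tA tA'] by auto
      show "successively (e3c_adj p q t) E2" unfolding E2_def u_def v_def
        using tA tA' tB tB' tC tC0 dC0 succ_ph2[OF tA tA' tB tC0] succ_ph1[OF tA' tB tB' tC0]
        by (simp add: successively_append_iff successively_Cons hd_append hd_map last_map lA lB adj_sw adj0 differ1_sym)
    qed
    show "path_len E2 \<le> p+q+7" unfolding E2_def path_len_def using lens by simp
  qed
  show ?thesis unfolding fam_def
  proof (intro exI[of _ Q] conjI allI impI)
    fix i assume i: "i < 2*m+2"
    show "e3c_path p q t (A,B,C,2) (A',B',C,0) (Q i)" "path_len (Q i) \<le> p+q+7"
      using vP vD vE1 vE2 i unfolding Q_def u_def[symmetric] v_def[symmetric] by (auto split: if_splits)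
  next
    fix i j assume ij: "i < 2*m+2" "j < 2*m+2" "i \<noteq> j"
    show "internally_disjoint (A,B,C,2) (A',B',C,0) (Q i) (Q j)"
      unfolding internally_disjoint_def u_def[symmetric] v_def[symmetric]
      using ownQ[OF ij(1)] ownQ[OF ij(2)] ij(3) by blast
  qed
qed



fun own21 :: "nat list \<Rightarrow> nat list \<Rightarrow> nat list \<Rightarrow> nat list \<Rightarrow> nat list \<Rightarrow> nat \<Rightarrow> nat \<Rightarrow> nat \<Rightarrow> e3vert \<Rightarrow> nat" where
  "own21 A A' B B' C r h0 t0 (X,Y,Z,e) =
    (let swp = (\<lambda>k. if k = h0 then t0 else if k = t0 then h0 else k) in
    (if Z \<noteq> C \<or> e = 0 then 2*r+1
     else if e = 2 then (if Y = B then (if X \<in> set (seg A A') then h0 else devidx A X)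
                         else if Y = B' then 2*r else swp (devidx B' Y))
     else (if X = A then 2*r else if X = A' then (if Y \<in> set (seg B B') then h0 else swp (devidx B' Y))
           else devidx A X)))"

lemma L21:
  fixes r s t :: nat and A A' B B' C :: "nat list"
  assumes m: "1 \<le> r" "r \<le> s" "1 \<le> t"
    and tA: "tern_str r A" and tA': "tern_str r A'" and tB: "tern_str s B" and tB': "tern_str s B'"
    and tC: "tern_str t C" and AA: "A \<noteq> A'" and BB: "B \<noteq> B'"
  shows "fam r s t (A,B,C,2) (A',B',C,1) (2*r+2) (r+s+7)"
proof -
  obtain h0 where h0: "h0 < 2*r" and h0n: "\<And>h. h < 2*r \<Longrightarrow> h \<noteq> h0 \<Longrightarrow> dev A h \<notin> set (seg A A')"
    using first_dev[OF tA tA' AA] by blast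
  obtain t0 where t0: "t0 < 2*s" and t0n: "\<And>h. h < 2*s \<Longrightarrow> h \<noteq> t0 \<Longrightarrow> dev B' h \<notin> set (seg B B')"
    using last_dev[OF tB tB' BB] by blast
  define u where "u = (A,B,C,2::nat)"
  define v where "v = (A',B',C,1::nat)"
  define C0 where "C0 = dev C 0"
  have z0: "0 < 2*t" using m by simp
  have lA: "length A = length A'" and lB: "length B = length B'" using tA tA' tB tB' by (simp_all add: tern_str_def)
  have A'in: "A' \<in> set (seg A A')" using seg_mem_last[OF lA] .
  have Bin: "B \<in> set (seg B B')" using seg_mem_hd .
  have tC0: "tern_str t C0" using dev_tern[OF tC z0] C0_def by simp
  have C0C: "C0 \<noteq> C" using dev_ne[OF tC z0] C0_def by simp
  have dC0: "differ1 C C0" using differ1_dev[OF tC z0] C0_def by simp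
  define sg where "sg h = (if h = t0 then h0 else h)" for h
  define Tl where "Tl h = dev B' (sg h)" for h
  define P where "P h = u # (dev A h,B,C,2) # map (\<lambda>Y. (dev A h, Y, C, 1::nat)) (seg B (Tl h)) @
      map (\<lambda>X. (X, Tl h, C, 2)) (seg (dev A h) A') @ [(A', Tl h, C, 1), v]" for h
  define D where "D = map (\<lambda>X. (X,B,C,2::nat)) (seg A A') @ map (\<lambda>Y. (A',Y,C,1)) (seg B B')"
  define E1 where "E1 = u # map (\<lambda>Y. (A,Y,C,1::nat)) (seg B B') @ map (\<lambda>X. (X,B',C,2)) (seg A A') @ [v]"
  define E2 where "E2 = u # (A,B,C,0) # (A,B,C0,0) # map (\<lambda>X. (X,B,C0,2::nat)) (seg A A') @
      map (\<lambda>Y. (A',Y,C0,1)) (seg B B') @ [(A',B',C0,0), (A',B',C,0), v]"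
  define Q where "Q i = (if i < 2*r then (if i = h0 then D else P i) else if i = 2*r then E1 else E2)" for i
  define own where "own = own21 A A' B B' C r h0 t0"
  have hf: "dev A h \<noteq> A" "dev A h \<noteq> A'" "dev A h \<notin> set (seg A A')" "devidx A (dev A h) = h"
     "tern_str r (dev A h)" "differ1 A (dev A h)"
     "Tl h \<noteq> B" "Tl h \<noteq> B'" "Tl h \<notin> set (seg B B')"
     "(\<lambda>k. if k = h0 then t0 else if k = t0 then h0 else k) (devidx B' (Tl h)) = h"
     "tern_str s (Tl h)" "differ1 (Tl h) B'"
    if "h < 2*r" "h \<noteq> h0" for h
  proof -
    have hp: "h < 2*r" "h < 2*s" using that m by auto
    have n: "dev A h \<notin> set (seg A A')" using h0n hp that by blast
    have sgs: "sg h < 2*s" "sg h \<noteq> t0" using hp h0 m that unfolding sg_def by auto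
    have n2: "Tl h \<notin> set (seg B B')" using t0n[OF sgs] Tl_def by simp
    show "dev A h \<noteq> A" "dev A h \<noteq> A'" "dev A h \<notin> set (seg A A')" "devidx A (dev A h) = h"
     "tern_str r (dev A h)" "differ1 A (dev A h)"
      using differ1_dev[OF tA hp(1)] n A'in dev_ne[OF tA hp(1)] devidx_dev[OF tA hp(1)] dev_tern[OF tA hp(1)]
      by auto
    show "Tl h \<noteq> B" "Tl h \<noteq> B'" "Tl h \<notin> set (seg B B')" "tern_str s (Tl h)" "differ1 (Tl h) B'"
      using n2 Bin dev_ne[OF tB' sgs(1)] dev_tern[OF tB' sgs(1)] differ1_dev[OF tB' sgs(1)] differ1_sym
      unfolding Tl_def by auto
    show "(\<lambda>k. if k = h0 then t0 else if k = t0 then h0 else k) (devidx B' (Tl h)) = h"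
      unfolding Tl_def devidx_dev[OF tB' sgs(1)] using that unfolding sg_def by auto
  qed
  have ownP: "own x = h" if "h < 2*r" "h \<noteq> h0" "x \<in> set (P h)" "x \<noteq> u" "x \<noteq> v" for h x
    using that(3-) hf[OF that(1,2)] AA BB unfolding P_def own_def u_def v_def by (auto simp: Let_def)
  have ownD: "own x = h0" if "x \<in> set D" "x \<noteq> u" "x \<noteq> v" for x
    using that AA BB unfolding D_def own_def u_def v_def by (auto simp: Let_def)
  have ownE1: "own x = 2*r" if "x \<in> set E1" "x \<noteq> u" "x \<noteq> v" for x
    using that AA BB unfolding E1_def own_def u_def v_def by (auto simp: Let_def)
  have ownE2: "own x = 2*r+1" if "x \<in> set E2" "x \<noteq> u" "x \<noteq> v" for x
    using that AA BB C0C unfolding E2_def own_def u_def v_def by (auto simp: Let_def)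
  have ownQ: "own x = i" if "i < 2*r+2" "x \<in> set (Q i)" "x \<noteq> u" "x \<noteq> v" for i x
    using that ownP ownD ownE1 ownE2 unfolding Q_def by (auto split: if_splits)
  have sd: "distinct (seg X Y)" if "length X = length Y" for X Y using seg_distinct that by simp
  have lens: "length (seg A A') \<le> r+1" "length (seg B B') \<le> s+1"
    using seg_len_tern[OF tA tA'] seg_len_tern[OF tB tB'] by auto
  have vP: "e3c_path r s t u v (P h) \<and> path_len (P h) \<le> r+s+7" if h: "h < 2*r" "h \<noteq> h0" for h
  proof
    note f = hf[OF h]
    have ld: "length (dev A h) = length A'" using lA by simp
    have lt: "length B = length (Tl h)" using f(11) tB by (simp add: tern_str_def)
    show "e3c_path r s t u v (P h)"
    proof (rule e3c_pathI)
      show "P h \<noteq> []" "hd (P h) = u" "last (P h) = v" unfolding P_def by simp_all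
      show "distinct (P h)" unfolding P_def u_def v_def
        using f(1-3,7-9) AA BB sd[OF lt] sd[OF ld] by (auto simp: distinct_map inj_on_def)
      show "set (P h) \<subseteq> e3c_verts r s t" unfolding P_def u_def v_def
        using f(5,11) tA tA' tB tB' tC seg_tern[OF tB f(11)] seg_tern[OF f(5) tA'] by auto
      have tl1: "e3c_adj r s t (A', Tl h, C, 1) (A', B', C, 1)"
        using adj1[OF tA' f(11) tB' tC f(12)] .
      show "successively (e3c_adj r s t) (P h)" unfolding P_def u_def v_def
        using tl1 f(5,6,11,12) tA tA' tB tB' tC succ_ph1[OF f(5) tB f(11) tC] succ_ph2[OF f(5) tA' f(11) tC]
        by (simp add: successively_append_iff successively_Cons hd_append hd_map last_map lA lt ld adj_sw adj2 adj1)
    qed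
    show "path_len (P h) \<le> r+s+7" unfolding P_def path_len_def
      using seg_len_tern[OF tB f(11)] seg_len_tern[OF f(5) tA'] by simp
  qed
  have vD: "e3c_path r s t u v D \<and> path_len D \<le> r+s+7"
  proof
    show "e3c_path r s t u v D"
    proof (rule e3c_pathI)
      show "D \<noteq> []" "hd D = u" "last D = v" unfolding D_def u_def v_def by (simp_all add: hd_map last_map lB)
      show "distinct D" unfolding D_def u_def v_def
        using AA BB sd[OF lB] sd[OF lA] by (auto simp: distinct_map inj_on_def)
      show "set D \<subseteq> e3c_verts r s t" unfolding D_def u_def v_def
        using tA tA' tB tB' tC seg_tern[OF tB tB'] seg_tern[OF tA tA'] by auto
      show "successively (e3c_adj r s t) D" unfolding D_def u_def v_def
        using tA tA' tB tB' tC succ_ph2[OF tA tA' tB tC] succ_ph1[OF tA' tB tB' tC]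
        by (simp add: successively_append_iff successively_Cons hd_append hd_map last_map lA lB adj_sw)
    qed
    show "path_len D \<le> r+s+7" unfolding D_def path_len_def using lens by simp
  qed
  have vE1: "e3c_path r s t u v E1 \<and> path_len E1 \<le> r+s+7"
  proof
    show "e3c_path r s t u v E1"
    proof (rule e3c_pathI)
      show "E1 \<noteq> []" "hd E1 = u" "last E1 = v" unfolding E1_def u_def v_def by (simp_all add: last_map)
      show "distinct E1" unfolding E1_def u_def v_def
        using AA BB sd[OF lB] sd[OF lA] by (auto simp: distinct_map inj_on_def)
      show "set E1 \<subseteq> e3c_verts r s t" unfolding E1_def u_def v_def
        using tA tA' tB tB' tC seg_tern[OF tB tB'] seg_tern[OF tA tA'] by auto
      show "successively (e3c_adj r s t) E1" unfolding E1_def u_def v_def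
        using tA tA' tB tB' tC succ_ph2[OF tA tA' tB' tC] succ_ph1[OF tA tB tB' tC]
        by (simp add: successively_append_iff successively_Cons hd_append hd_map last_map lA lB adj_sw)
    qed
    show "path_len E1 \<le> r+s+7" unfolding E1_def path_len_def using lens by simp
  qed
  have vE2: "e3c_path r s t u v E2 \<and> path_len E2 \<le> r+s+7"
  proof
    show "e3c_path r s t u v E2"
    proof (rule e3c_pathI)
      show "E2 \<noteq> []" "hd E2 = u" "last E2 = v" unfolding E2_def u_def v_def by (simp_all add: last_map)
      show "distinct E2" unfolding E2_def u_def v_def
        using AA BB C0C sd[OF lB] sd[OF lA] by (auto simp: distinct_map inj_on_def)
      show "set E2 \<subseteq> e3c_verts r s t" unfolding E2_def u_def v_def
        using tA tA' tB tB' tC tC0 seg_tern[OF tB tB'] seg_tern[OF tA tA'] by auto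
      show "successively (e3c_adj r s t) E2" unfolding E2_def u_def v_def
        using tA tA' tB tB' tC tC0 dC0 succ_ph2[OF tA tA' tB tC0] succ_ph1[OF tA' tB tB' tC0]
        by (simp add: successively_append_iff successively_Cons hd_append hd_map last_map lA lB adj_sw adj0 differ1_sym)
    qed
    show "path_len E2 \<le> r+s+7" unfolding E2_def path_len_def using lens by simp
  qed
  show ?thesis unfolding fam_def
  proof (intro exI[of _ Q] conjI allI impI)
    fix i assume i: "i < 2*r+2"
    show "e3c_path r s t (A,B,C,2) (A',B',C,1) (Q i)" "path_len (Q i) \<le> r+s+7"
      using vP vD vE1 vE2 i unfolding Q_def u_def[symmetric] v_def[symmetric] by (auto split: if_splits)
  next
    fix i j assume ij: "i < 2*r+2" "j < 2*r+2" "i \<noteq> j"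
    show "internally_disjoint (A,B,C,2) (A',B',C,1) (Q i) (Q j)"
      unfolding internally_disjoint_def u_def[symmetric] v_def[symmetric]
      using ownQ[OF ij(1)] ownQ[OF ij(2)] ij(3) by blast
  qed
qed



lemma fam_final:
  assumes "fam r s t u v n L" "\<not> e3c_adj r s t u v" "u \<noteq> v"
  shows "\<exists>P :: nat \<Rightarrow> e3vert list. inj_on P {..<n} \<and>
           (\<forall>i<n. e3c_path r s t u v (P i) \<and> path_len (P i) \<le> L) \<and>
           (\<forall>i<n. \<forall>j<n. i \<noteq> j \<longrightarrow> internally_disjoint u v (P i) (P j))"
proof -
  obtain P where P1: "\<forall>i<n. e3c_path r s t u v (P i) \<and> path_len (P i) \<le> L"
    and P2: "\<forall>i<n. \<forall>j<n. i \<noteq> j \<longrightarrow> internally_disjoint u v (P i) (P j)"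
    using assms(1) unfolding fam_def by blast
  have "inj_on P {..<n}"
  proof (rule inj_onI, rule ccontr)
    fix i j assume ij: "i \<in> {..<n}" "j \<in> {..<n}" "P i = P j" "i \<noteq> j"
    define p where "p = P i"
    have "internally_disjoint u v (P i) (P j)" using P2 ij by blast
    then have sp: "set p \<subseteq> {u, v}" using ij(3) unfolding internally_disjoint_def p_def by simp
    have pp: "e3c_path r s t u v p" using P1 ij(1) unfolding p_def by blast
    then have p: "p \<noteq> []" "hd p = u" "last p = v" "distinct p"
      "\<forall>i. Suc i < length p \<longrightarrow> e3c_adj r s t (p ! i) (p ! Suc i)"
      unfolding e3c_path_def by blast+
    have "length p \<noteq> 1"
    proof
      assume "length p = 1"
      then obtain x where "p = [x]" by (cases p) auto
      then show False using p assms(3) by simp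
    qed
    moreover have "length p \<noteq> 0" using p(1) by simp
    ultimately have l: "Suc 1 \<le> length p" by linarith
    have a: "e3c_adj r s t (p ! 0) (p ! 1)" using p(5) l by auto
    have p0: "p ! 0 = u" using p(1,2) by (simp add: hd_conv_nth)
    have "p ! 1 \<in> set p" using l by simp
    moreover have "p ! 1 \<noteq> p ! 0" using nth_eq_iff_index_eq[OF p(4), of 1 0] l p(1) by simp
    ultimately have "p ! 1 = v" using sp p0 by auto
    then show False using a p0 assms(2) by simp
  qed
  then show ?thesis using P1 P2 by blast
qed

theorem lemma20:
  fixes r s t :: nat and A B C A' B' C' :: "nat list" and d d' :: nat
  assumes "1 \<le> r" "r \<le> s" "s \<le> t"
    and "(A, B, C, d) \<in> e3c_verts r s t"
    and "(A', B', C', d') \<in> e3c_verts r s t"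
    and "A \<noteq> A'" "B \<noteq> B'" "C = C'" "d \<noteq> d'"
  shows "\<exists>P :: nat \<Rightarrow> e3vert list.
           inj_on P {..<2*r+2} \<and>
           (\<forall>i<2*r+2. e3c_path r s t (A, B, C, d) (A', B', C', d') (P i)
                       \<and> path_len (P i) \<le> r + s + 7) \<and>
           (\<forall>i<2*r+2. \<forall>j<2*r+2. i \<noteq> j \<longrightarrow>
              internally_disjoint (A, B, C, d) (A', B', C', d') (P i) (P j))"
proof (rule fam_final)
  have v: "tern_str r A" "tern_str s B" "tern_str t C" "d < 3"
    "tern_str r A'" "tern_str s B'" "tern_str t C" "d' < 3"
    using assms(4,5,8) by auto
  have t1: "1 \<le> t" using assms(1-3) by simp
  show "\<not> e3c_adj r s t (A, B, C, d) (A', B', C', d')"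
    using assms(6,7) unfolding e3c_adj_def by simp
  show "(A, B, C, d) \<noteq> (A', B', C', d')" using assms(6) by simp
  have "d = 0 \<or> d = 1 \<or> d = 2" "d' = 0 \<or> d' = 1 \<or> d' = 2" using v by auto
  then have cases: "(d = 2 \<and> d' = 1) \<or> (d = 1 \<and> d' = 2) \<or> (d = 2 \<and> d' = 0) \<or> (d = 0 \<and> d' = 2)
      \<or> (d = 1 \<and> d' = 0) \<or> (d = 0 \<and> d' = 1)" using assms(9) by auto
  have f21: "fam r s t (X,Y,C,2) (X',Y',C,1) (2*r+2) (r+s+7)"
    if "tern_str r X" "tern_str r X'" "tern_str s Y" "tern_str s Y'" "X \<noteq> X'" "Y \<noteq> Y'" for X X' Y Y'
    using L21[OF assms(1,2) t1 that(1,2,3,4) v(3) that(5,6)] .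
  have f20: "fam r s t (X,Y,C,2) (X',Y',C,0) (2*r+2) (r+s+7)"
    if "tern_str r X" "tern_str r X'" "tern_str s Y" "tern_str s Y'" "X \<noteq> X'" "Y \<noteq> Y'" for X X' Y Y'
    using L20[of r r t X X' s Y Y' C] assms(1-3) that v(3) by simp
  have f10: "fam r s t (X,Y,C,1) (X',Y',C,0) (2*r+2) (r+s+7)"
    if "tern_str r X" "tern_str r X'" "tern_str s Y" "tern_str s Y'" "X \<noteq> X'" "Y \<noteq> Y'" for X X' Y Y'
  proof (rule fam_phi)
    have "fam s r t (Y,X,C,2) (Y',X',C,0) (2*r+2) (s+r+7)"
      using L20[of r s t Y Y' r X X' C] assms(1-3) that v(3) by simp
    then show "fam s r t (phi (X,Y,C,1)) (phi (X',Y',C,0)) (2*r+2) (r+s+7)"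
      by (simp add: sw_def add.commute)
  qed
  show "fam r s t (A, B, C, d) (A', B', C', d') (2*r+2) (r+s+7)"
    using cases
  proof (elim disjE conjE)
    assume "d = 2" "d' = 1" then show ?thesis using f21[OF v(1,5,2,6) assms(6,7)] assms(8) by simp
  next
    assume "d = 1" "d' = 2" then show ?thesis using fam_rev[OF f21[OF v(5,1,6,2) assms(6,7)[symmetric]]] assms(8) by simp
  next
    assume "d = 2" "d' = 0" then show ?thesis using f20[OF v(1,5,2,6) assms(6,7)] assms(8) by simp
  next
    assume "d = 0" "d' = 2" then show ?thesis using fam_rev[OF f20[OF v(5,1,6,2) assms(6,7)[symmetric]]] assms(8) by simp
  next
    assume "d = 1" "d' = 0" then show ?thesis using f10[OF v(1,5,2,6) assms(6,7)] assms(8) by simp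
  next
    assume "d = 0" "d' = 1" then show ?thesis using fam_rev[OF f10[OF v(5,1,6,2) assms(6,7)[symmetric]]] assms(8) by simp
  qed
qed

end
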